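(* Let $k\ge s\ge r\ge 1$ be fixed integers and let $H$ be a fixed $s$-uniform hypergraph with $k$ vertices and $m\ge 1$ edges. Then for every strategy $\mathcal S$ and every $t=t(n)=o\!\left(n^{\,r-(k-s+r)/m}\right)$, a.a.s. $G^{(r,s)}_t$ does not contain a copy of $H$. Consequently $\tau^{(r)}(H)\ge n^{\,r-(k-s+r)/m}$.
   Context: Semi-random hypergraph process: fix integers $1\le r\le s$ and $n\ge s$. Start with the empty $s$-uniform multi-hypergraph $G_0^{(r,s)}$ on vertex set $[n]=\{1,\dots,n\}$. In each step $t\ge1$, a set $U_t$ of $r$ vertices is chosen uniformly at random among all $r$-subsets of $[n]$, independently of all previous choices; the player then chooses a set $V_t$ of $s-r$ vertices of $[n]\setminus U_t$ (when $r=s$, $V_t=\emptyset$), and the edge $U_t\cup V_t$ is added to $G^{(r,s)}_{t-1}$ to form $G^{(r,s)}_t$ (parallel edges are allowed). A strategy is, for each $n$, a sequence of functions $(f_t)_{t\ge1}$ with $V_t=f_t(U_1,V_1,\dots,U_{t-1},V_{t-1},U_t)$. An event holds a.a.s. if its probability tends to $1$ as $n\to\infty$; $a_n\gg b_n$ means $b_n=o(a_n)$. "$G_t^{(r,s)}$ contains $H$" means $G_t^{(r,s)}$ has a sub-hypergraph isomorphic to $H$. For a function $f(n)$: "$\tau^{(r)}(H)\le f$" means there is a strategy such that for every $t=t(n)\gg f(n)$, a.a.s. $G^{(r,s)}_t$ contains $H$; "$\tau^{(r)}(H)\ge f$" means for every strategy and every $t=t(n)=o(f(n))$, a.a.s.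 $G^{(r,s)}_t$ does not contain $H$; "$\tau^{(r)}(H)=f$" means both hold. *)

theory Defs
  imports "HOL-Probability.Probability" "HOL-Library.Landau_Symbols"
begin

text \<open>A strategy: for each n, a function mapping the history
  [(U_1,V_1),...,(U_{t-1},V_{t-1})] and the new random set U_t to V_t.\<close>
type_synonym strategy = "nat \<Rightarrow> (nat set \<times> nat set) list \<Rightarrow> nat set \<Rightarrow> nat set"

definition rsets :: "nat \<Rightarrow> nat \<Rightarrow> nat set set" where
  "rsets n r = {U. U \<subseteq> {1..n} \<and> card U = r}"

definition valid_strategy :: "nat \<Rightarrow> nat \<Rightarrow> strategy \<Rightarrow> bool" where
  "valid_strategy r s S \<longleftrightarrow>
     (\<forall>n\<ge>s. \<forall>h U. U \<in> rsets n r \<longrightarrow>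
        S n h U \<subseteq> {1..n} - U \<and> card (S n h U) = s - r)"

fun hist_aux :: "strategy \<Rightarrow> nat \<Rightarrow> (nat set \<times> nat set) list \<Rightarrow> nat set list
                   \<Rightarrow> (nat set \<times> nat set) list" where
  "hist_aux S n h [] = h"
| "hist_aux S n h (u # us) = hist_aux S n (h @ [(u, S n h u)]) us"

definition history :: "strategy \<Rightarrow> nat \<Rightarrow> nat set list \<Rightarrow> (nat set \<times> nat set) list" where
  "history S n us = hist_aux S n [] us"

definition semi_random_graph :: "strategy \<Rightarrow> nat \<Rightarrow> nat set list \<Rightarrow> nat set multiset" where
  "semi_random_graph S n us = mset (map (\<lambda>(U, V). U \<union> V) (history S n us))"

definition contains_copy :: "nat \<Rightarrow> nat set multiset \<Rightarrow> 'a set \<Rightarrow> 'a set set \<Rightarrow> bool" where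
  "contains_copy n G VH EH \<longleftrightarrow>
     (\<exists>\<phi>. inj_on \<phi> VH \<and> \<phi> ` VH \<subseteq> {1..n} \<and> (\<forall>e\<in>EH. \<phi> ` e \<in># G))"

text \<open>The random sequence (U_1,...,U_t): independent uniform r-subsets of [n],
  i.e. uniform on the t-fold product.\<close>
definition random_sets :: "nat \<Rightarrow> nat \<Rightarrow> nat \<Rightarrow> nat set list pmf" where
  "random_sets n r t = pmf_of_set {us. length us = t \<and> set us \<subseteq> rsets n r}"

end

theory Submission
  imports Defs
begin

lemma hist_aux_map_fst: "map fst (hist_aux S n h us) = map fst h @ us"
  by (induction us arbitrary: h) auto

lemma hist_aux_prefix: "\<exists>z. hist_aux S n h us = h @ z"
proof (induction us arbitrary: h)
  case Nil then show ?case by auto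
next
  case (Cons u us)
  then obtain z where "hist_aux S n (h @ [(u, S n h u)]) us = (h @ [(u, S n h u)]) @ z" by blast
  then show ?case by auto
qed

lemma hist_aux_append: "hist_aux S n h (xs @ ys) = hist_aux S n (hist_aux S n h xs) ys"
  by (induction xs arbitrary: h) auto

lemma length_hist_aux: "length (hist_aux S n h us) = length h + length us"
  by (induction us arbitrary: h) auto

lemma history_take_nth:
  assumes "i < length us"
  shows "history S n (take (Suc i) us) ! i = history S n us ! i"
proof -
  have "us = take (Suc i) us @ drop (Suc i) us" by simp
  then have "history S n us = hist_aux S n (history S n (take (Suc i) us)) (drop (Suc i) us)"
    unfolding history_def by (metis hist_aux_append)
  moreover obtain z where "hist_aux S n (history S n (take (Suc i) us)) (drop (Suc i) us) = history S n (take (Suc i) us) @ z"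
    using hist_aux_prefix by blast
  moreover have "length (history S n (take (Suc i) us)) = Suc i"
    unfolding history_def using assms by (simp add: length_hist_aux)
  ultimately show ?thesis by (simp add: nth_append)
qed

lemma history_fst: "i < length us \<Longrightarrow> fst (history S n us ! i) = us ! i"
proof -
  assume "i < length us"
  then have "fst (history S n us ! i) = map fst (history S n us) ! i"
    by (simp add: history_def length_hist_aux)
  then show ?thesis by (simp add: history_def hist_aux_map_fst)
qed

lemma count_lemma:
  fixes R :: "'b set" and F :: "'b list \<Rightarrow> 'b set"
  assumes R: "finite R" and FR: "\<And>p. F p \<subseteq> R" and Fc: "\<And>p. card (F p) \<le> c"
  shows "Suc i \<le> t \<Longrightarrow> J \<subseteq> {i<..<t} \<Longrightarrow>
    card {us. length us = t \<and> set us \<subseteq> R \<and> (\<forall>j\<in>J. us!j \<in> F (take (Suc i) us))} * card R ^ card J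
      \<le> card R ^ t * c ^ card J"
proof (induction t arbitrary: J rule: dec_induct)
  case base
  have "{i<..<Suc i} = ({}::nat set)" by auto
  then have "J = {}" using base by blast
  then show ?case using card_lists_length_eq[OF R, of "Suc i"] by (simp add: conj_commute)
next
  case (step t)
  define J' where "J' = J - {t}"
  have J': "J' \<subseteq> {i<..<t}" using step.prems unfolding J'_def by auto
  have finJ: "finite J" using step.prems finite_subset by blast
  define A' where "A' = {us. length us = t \<and> set us \<subseteq> R \<and> (\<forall>j\<in>J'. us!j \<in> F (take (Suc i) us))}"
  define G where "G xs = (if t \<in> J then F (take (Suc i) xs) else R)" for xs
  define g where "g = (if t \<in> J then c else card R)"
  have IH: "card A' * card R ^ card J' \<le> card R ^ t * c ^ card J'"
    using step.IH[OF J'] unfolding A'_def .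
  have finA': "finite A'"
    by (rule finite_subset[OF _ finite_lists_length_eq[OF R, of t]]) (auto simp: A'_def)
  have sub: "{us. length us = Suc t \<and> set us \<subseteq> R \<and> (\<forall>j\<in>J. us!j \<in> F (take (Suc i) us))}
     \<subseteq> (\<lambda>(xs,x). xs @ [x]) ` (SIGMA xs:A'. G xs)"
  proof
    fix us assume us: "us \<in> {us. length us = Suc t \<and> set us \<subseteq> R \<and> (\<forall>j\<in>J. us!j \<in> F (take (Suc i) us))}"
    then have len: "length us = Suc t" and sR: "set us \<subseteq> R" and P: "\<forall>j\<in>J. us!j \<in> F (take (Suc i) us)" by auto
    have ne: "us \<noteq> []" using len by auto
    have eq: "us = butlast us @ [last us]" using ne by simp
    have tk: "take (Suc i) us = take (Suc i) (butlast us)"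
      using step.hyps len by (simp add: take_butlast)
    have "butlast us \<in> A'"
      unfolding A'_def
    proof (intro CollectI conjI ballI)
      show "length (butlast us) = t" using len by simp
      show "set (butlast us) \<subseteq> R" using sR by (meson in_set_butlastD subset_iff)
      fix j assume j: "j \<in> J'"
      then have "j < t" using J' by auto
      then have "butlast us ! j = us ! j" using len by (simp add: nth_butlast)
      then show "butlast us ! j \<in> F (take (Suc i) (butlast us))" using P j tk unfolding J'_def by auto
    qed
    moreover have "last us \<in> G (butlast us)"
    proof (cases "t \<in> J")
      case True
      have "last us = us ! t" using len ne by (simp add: last_conv_nth)
      then show ?thesis using P True tk unfolding G_def by auto
    next
      case False
      then show ?thesis using sR ne unfolding G_def by auto
    qed
    ultimately show "us \<in> (\<lambda>(xs,x). xs @ [x]) ` (SIGMA xs:A'. G xs)"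
      using eq by (auto intro!: image_eqI[where x="(butlast us, last us)"])
  qed
  have finG: "\<And>xs. finite (G xs)" unfolding G_def using R FR by (auto intro: finite_subset)
  have "card {us. length us = Suc t \<and> set us \<subseteq> R \<and> (\<forall>j\<in>J. us!j \<in> F (take (Suc i) us))}
      \<le> card (SIGMA xs:A'. G xs)"
    by (rule order_trans[OF card_mono card_image_le])
       (use sub finA' finG in auto)
  also have "\<dots> = (\<Sum>xs\<in>A'. card (G xs))" using finA' finG by (simp add: card_SigmaI)
  also have "\<dots> \<le> card A' * g"
    using sum_bounded_above[of A' "\<lambda>xs. card (G xs)" g] Fc unfolding G_def g_def by auto
  finally have c1: "card {us. length us = Suc t \<and> set us \<subseteq> R \<and> (\<forall>j\<in>J. us!j \<in> F (take (Suc i) us))} \<le> card A' * g" .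
  show ?case
  proof (cases "t \<in> J")
    case True
    then have cJ: "card J = Suc (card J')" unfolding J'_def using finJ
      by (metis card_Suc_Diff1)
    have "card {us. length us = Suc t \<and> set us \<subseteq> R \<and> (\<forall>j\<in>J. us!j \<in> F (take (Suc i) us))} * card R ^ card J
        \<le> (card A' * c) * (card R * card R ^ card J')"
      using c1 True cJ unfolding g_def by (simp add: mult_right_mono)
    also have "\<dots> = (card A' * card R ^ card J') * (c * card R)" by simp
    also have "\<dots> \<le> (card R ^ t * c ^ card J') * (c * card R)" using IH by (rule mult_right_mono) simp
    also have "\<dots> = card R ^ Suc t * c ^ card J" using cJ by simp
    finally show ?thesis .
  next
    case False
    then have "J' = J" unfolding J'_def by auto
    have "card {us. length us = Suc t \<and> set us \<subseteq> R \<and> (\<forall>j\<in>J. us!j \<in> F (take (Suc i) us))} * card R ^ card J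
        \<le> (card A' * card R) * card R ^ card J'"
      using c1 False \<open>J' = J\<close> unfolding g_def by (simp add: mult_right_mono)
    also have "\<dots> = (card A' * card R ^ card J') * card R" by simp
    also have "\<dots> \<le> (card R ^ t * c ^ card J') * card R" using IH by (rule mult_right_mono) simp
    also have "\<dots> = card R ^ Suc t * c ^ card J" using \<open>J' = J\<close> by simp
    finally show ?thesis .
  qed
qed


definition edge_at :: "strategy \<Rightarrow> nat \<Rightarrow> nat set list \<Rightarrow> nat \<Rightarrow> nat set" where
  "edge_at S n p i = (case history S n p ! i of (U, V) \<Rightarrow> U \<union> V)"

definition Fset :: "strategy \<Rightarrow> nat \<Rightarrow> nat \<Rightarrow> nat \<Rightarrow> nat set \<Rightarrow> nat \<Rightarrow> nat set list \<Rightarrow> nat set set" where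
  "Fset S n r s W i p = {U \<in> rsets n r. card (edge_at S n p i) = s \<and> U \<subseteq> edge_at S n p i \<union> W}"

lemma finite_rsets: "finite (rsets n r)"
  by (rule finite_subset[of _ "Pow {1..n}"]) (auto simp: rsets_def)

lemma card_rsets: "card (rsets n r) = n choose r"
  using n_subsets[of "{1..n}" r] by (simp add: rsets_def)

lemma card_Fset:
  assumes "1 \<le> s" "s \<le> k" "W \<subseteq> {1..n}" "card W = k - s"
  shows "card (Fset S n r s W i p) \<le> k choose r"
proof (cases "card (edge_at S n p i) = s")
  case True
  let ?E = "edge_at S n p i"
  have fE: "finite ?E" using True assms(1) by (metis card.infinite not_one_le_zero)
  have fW: "finite W" using assms(3) finite_subset by blast
  have "Fset S n r s W i p \<subseteq> {U. U \<subseteq> ?E \<union> W \<and> card U = r}"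
    unfolding Fset_def rsets_def by auto
  then have "card (Fset S n r s W i p) \<le> card {U. U \<subseteq> ?E \<union> W \<and> card U = r}"
    by (rule card_mono[rotated]) (use fE fW in \<open>auto intro: finite_subset\<close>)
  also have "\<dots> = card (?E \<union> W) choose r" using fE fW by (simp add: n_subsets)
  also have "\<dots> \<le> k choose r"
  proof (rule binomial_right_mono)
    have "card (?E \<union> W) \<le> card ?E + card W" by (rule card_Un_le)
    then show "card (?E \<union> W) \<le> k" using True assms by simp
  qed
  finally show ?thesis .
next
  case False
  then have "Fset S n r s W i p = {}" unfolding Fset_def by auto
  then show ?thesis by simp
qed

lemma card_UN_mult_le:
  assumes "finite I" "\<And>x. x \<in> I \<Longrightarrow> card (X x) * P \<le> K"
  shows "card (\<Union>x\<in>I. X x) * P \<le> card I * (K::nat)"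
proof -
  have "card (\<Union>x\<in>I. X x) * P \<le> (\<Sum>x\<in>I. card (X x)) * P"
    by (rule mult_right_mono[OF card_UN_le[OF assms(1)]]) simp
  also have "\<dots> = (\<Sum>x\<in>I. card (X x) * P)" by (simp add: sum_distrib_right)
  also have "\<dots> \<le> card I * K" using sum_bounded_above[of I "\<lambda>x. card (X x) * P" K] assms(2) by simp
  finally show ?thesis .
qed

definition Aset where
  "Aset S n r s t W i J = {us. length us = t \<and> set us \<subseteq> rsets n r \<and>
       (\<forall>j\<in>J. us!j \<in> Fset S n r s W i (take (Suc i) us))}"

lemma cover:
  fixes VH :: "'a set" and EH :: "'a set set"
  assumes "finite VH" "card VH = k" "\<forall>e\<in>EH. e \<subseteq> VH \<and> card e = s"
    and "card EH = m" "m \<ge> 1" "s \<le> k"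
  shows "{us. length us = t \<and> set us \<subseteq> rsets n r} \<inter> {us. contains_copy n (semi_random_graph S n us) VH EH}
    \<subseteq> (\<Union>i\<in>{..<t}. \<Union>J\<in>{J. J \<subseteq> {i<..<t} \<and> card J = m - 1}.
          \<Union>W\<in>{W. W \<subseteq> {1..n} \<and> card W = k - s}. Aset S n r s t W i J)"
proof
  fix us assume us: "us \<in> {us. length us = t \<and> set us \<subseteq> rsets n r} \<inter> {us. contains_copy n (semi_random_graph S n us) VH EH}"
  then have len: "length us = t" and sR: "set us \<subseteq> rsets n r"
    and cc: "contains_copy n (semi_random_graph S n us) VH EH" by auto
  obtain \<phi> where inj: "inj_on \<phi> VH" and phn: "\<phi> ` VH \<subseteq> {1..n}"
    and ed: "\<forall>e\<in>EH. \<phi> ` e \<in># semi_random_graph S n us"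
    using cc unfolding contains_copy_def by blast
  have lenh: "length (history S n us) = t" using len by (simp add: history_def length_hist_aux)
  have "\<forall>e\<in>EH. \<exists>j. j < t \<and> edge_at S n us j = \<phi> ` e"
  proof
    fix e assume "e \<in> EH"
    then have "\<phi> ` e \<in> set (map (\<lambda>(U, V). U \<union> V) (history S n us))"
      using ed unfolding semi_random_graph_def by simp
    then obtain j where "j < length (history S n us)" "(\<lambda>(U, V). U \<union> V) (history S n us ! j) = \<phi> ` e"
      by (auto simp: in_set_conv_nth)
    then have "edge_at S n us j = \<phi> ` e" unfolding edge_at_def by (simp add: case_prod_beta)
    then show "\<exists>j. j < t \<and> edge_at S n us j = \<phi> ` e"
      using lenh \<open>j < length (history S n us)\<close> by auto
  qed
  then obtain idx where idx: "\<And>e. e \<in> EH \<Longrightarrow> idx e < t \<and> edge_at S n us (idx e) = \<phi> ` e"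
    by metis
  have finEH: "finite EH" using assms(4,5) by (metis card.infinite not_one_le_zero)
  have neEH: "EH \<noteq> {}" using assms(4,5) by auto
  have injidx: "inj_on idx EH"
  proof
    fix e e' assume "e \<in> EH" "e' \<in> EH" "idx e = idx e'"
    then have "\<phi> ` e = \<phi> ` e'" using idx by metis
    moreover have "e \<subseteq> VH" "e' \<subseteq> VH" using \<open>e \<in> EH\<close> \<open>e' \<in> EH\<close> assms(3) by auto
    ultimately show "e = e'" using inj by (simp add: inj_on_image_eq_iff)
  qed
  obtain e1 where e1: "e1 \<in> EH" "\<And>e. e \<in> EH \<Longrightarrow> idx e1 \<le> idx e"
  proof -
    have "Min (idx ` EH) \<in> idx ` EH" using finEH neEH by simp
    then obtain e1 where "e1 \<in> EH" "idx e1 = Min (idx ` EH)" by auto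
    then show ?thesis using that finEH by auto
  qed
  define i where "i = idx e1"
  define J where "J = idx ` (EH - {e1})"
  define W where "W = \<phi> ` VH - \<phi> ` e1"
  have e1V: "e1 \<subseteq> VH" and ce1: "card e1 = s" using e1 assms(3) by auto
  have it: "i < t" using idx e1 unfolding i_def by auto
  have Jsub: "J \<subseteq> {i<..<t}"
  proof
    fix j assume "j \<in> J"
    then obtain e where e: "e \<in> EH" "e \<noteq> e1" "j = idx e" unfolding J_def by auto
    have "idx e \<noteq> idx e1" using injidx e e1(1) by (metis inj_on_contraD)
    then show "j \<in> {i<..<t}" using e e1(2)[of e] idx[of e] unfolding i_def by auto
  qed
  have cJ: "card J = m - 1" unfolding J_def
    using card_image[OF inj_on_subset[OF injidx, of "EH - {e1}"]] finEH e1(1) assms(4)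
    by (simp add: card_Diff_singleton)
  have cphV: "card (\<phi> ` VH) = k" using card_image[OF inj] assms(2) by simp
  have ph1: "card (\<phi> ` e1) = s" using card_image[OF inj_on_subset[OF inj e1V]] ce1 by simp
  have Wsub: "W \<subseteq> {1..n}" using phn unfolding W_def by auto
  have cW: "card W = k - s" unfolding W_def
    using card_Diff_subset[of "\<phi> ` e1" "\<phi> ` VH"] cphV ph1 e1V assms(1) by (meson finite_imageI finite_subset image_mono)
  have "us \<in> Aset S n r s t W i J"
    unfolding Aset_def
  proof (intro CollectI conjI ballI)
    show "length us = t" "set us \<subseteq> rsets n r" using len sR by auto
    fix j assume jJ: "j \<in> J"
    then obtain e where e: "e \<in> EH" "j = idx e" unfolding J_def by auto
    have jt: "j < t" using e idx by auto
    have eat: "edge_at S n (take (Suc i) us) i = \<phi> ` e1"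
      using history_take_nth[of i us S n] it len idx[OF e1(1)] unfolding edge_at_def i_def by simp
    have usj: "us ! j \<subseteq> edge_at S n us j"
      using history_fst[of j us S n] jt len unfolding edge_at_def by (auto split: prod.splits)
    have "edge_at S n us j = \<phi> ` e" using idx e by auto
    also have "\<dots> \<subseteq> \<phi> ` VH" using e assms(3) by auto
    also have "\<dots> = \<phi> ` e1 \<union> W" unfolding W_def using e1V by auto
    finally have "us ! j \<subseteq> edge_at S n (take (Suc i) us) i \<union> W" using usj eat by auto
    moreover have "us ! j \<in> rsets n r" using sR jt len by auto
    ultimately show "us ! j \<in> Fset S n r s W i (take (Suc i) us)"
      unfolding Fset_def using eat ph1 by auto
  qed
  then show "us \<in> (\<Union>i\<in>{..<t}. \<Union>J\<in>{J. J \<subseteq> {i<..<t} \<and> card J = m - 1}.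
          \<Union>W\<in>{W. W \<subseteq> {1..n} \<and> card W = k - s}. Aset S n r s t W i J)"
    using it Jsub cJ Wsub cW by blast
qed


lemma card_bound:
  fixes VH :: "'a set" and EH :: "'a set set"
  assumes "finite VH" "card VH = k" "\<forall>e\<in>EH. e \<subseteq> VH \<and> card e = s"
    and "card EH = m" "m \<ge> 1" "1 \<le> r" "r \<le> s" "s \<le> k"
  shows "card ({us. length us = t \<and> set us \<subseteq> rsets n r} \<inter> {us. contains_copy n (semi_random_graph S n us) VH EH})
     * (n choose r) ^ (m - 1)
    \<le> t * ((t choose (m - 1)) * ((n choose (k - s)) * ((n choose r) ^ t * (k choose r) ^ (m - 1))))"
proof -
  let ?P = "(n choose r) ^ (m - 1)"
  let ?B = "(n choose r) ^ t * (k choose r) ^ (m - 1)"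
  let ?U = "(\<Union>i\<in>{..<t}. \<Union>J\<in>{J. J \<subseteq> {i<..<t} \<and> card J = m - 1}.
          \<Union>W\<in>{W. W \<subseteq> {1..n} \<and> card W = k - s}. Aset S n r s t W i J)"
  have finU: "finite ?U"
    by (rule finite_subset[OF _ finite_lists_length_eq[OF finite_rsets, of n r t]]) (auto simp: Aset_def)
  have "card ({us. length us = t \<and> set us \<subseteq> rsets n r} \<inter> {us. contains_copy n (semi_random_graph S n us) VH EH}) \<le> card ?U"
    by (rule card_mono[OF finU cover]) (use assms in auto)
  then have "card ({us. length us = t \<and> set us \<subseteq> rsets n r} \<inter> {us. contains_copy n (semi_random_graph S n us) VH EH}) * ?P
     \<le> card ?U * ?P" by (rule mult_right_mono) simp
  also have "\<dots> \<le> card {..<t} * ((t choose (m - 1)) * ((n choose (k - s)) * ?B))"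
  proof (rule card_UN_mult_le)
    fix i assume i: "i \<in> {..<t}"
    have finJS: "finite {J. J \<subseteq> {i<..<t} \<and> card J = m - 1}" by simp
    have "card (\<Union>J\<in>{J. J \<subseteq> {i<..<t} \<and> card J = m - 1}.
          \<Union>W\<in>{W. W \<subseteq> {1..n} \<and> card W = k - s}. Aset S n r s t W i J) * ?P
        \<le> card {J. J \<subseteq> {i<..<t} \<and> card J = m - 1} * ((n choose (k - s)) * ?B)"
    proof (rule card_UN_mult_le[OF finJS])
      fix J assume J: "J \<in> {J. J \<subseteq> {i<..<t} \<and> card J = m - 1}"
      have "card (\<Union>W\<in>{W. W \<subseteq> {1..n} \<and> card W = k - s}. Aset S n r s t W i J) * ?P
          \<le> card {W. W \<subseteq> {1..n} \<and> card W = k - s} * ?B"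
      proof (rule card_UN_mult_le)
        show "finite {W. W \<subseteq> {1..n} \<and> card W = k - s}" by simp
        fix W assume W: "W \<in> {W. W \<subseteq> {1..n} \<and> card W = k - s}"
        have "card (Aset S n r s t W i J) * card (rsets n r) ^ card J \<le> card (rsets n r) ^ t * (k choose r) ^ card J"
          unfolding Aset_def
        proof (rule count_lemma[OF finite_rsets])
          show "\<And>p. Fset S n r s W i p \<subseteq> rsets n r" unfolding Fset_def by auto
          show "\<And>p. card (Fset S n r s W i p) \<le> k choose r" using card_Fset W assms by auto
          show "Suc i \<le> t" using i by auto
          show "J \<subseteq> {i<..<t}" using J by auto
        qed
        then show "card (Aset S n r s t W i J) * ?P \<le> ?B" using J by (simp add: card_rsets)
      qed
      also have "\<dots> = (n choose (k - s)) * ?B" using n_subsets[of "{1..n}" "k - s"] by simp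
      finally show "card (\<Union>W\<in>{W. W \<subseteq> {1..n} \<and> card W = k - s}. Aset S n r s t W i J) * ?P
          \<le> (n choose (k - s)) * ?B" .
    qed
    also have "\<dots> \<le> (t choose (m - 1)) * ((n choose (k - s)) * ?B)"
    proof (rule mult_right_mono)
      have "card {J. J \<subseteq> {i<..<t} \<and> card J = m - 1} \<le> card {J. J \<subseteq> {..<t} \<and> card J = m - 1}"
        by (rule card_mono) auto
      then show "card {J. J \<subseteq> {i<..<t} \<and> card J = m - 1} \<le> t choose (m - 1)"
        using n_subsets[of "{..<t}" "m - 1"] by simp
    qed simp
    finally show "card (\<Union>J\<in>{J. J \<subseteq> {i<..<t} \<and> card J = m - 1}.
          \<Union>W\<in>{W. W \<subseteq> {1..n} \<and> card W = k - s}. Aset S n r s t W i J) * ?P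
        \<le> (t choose (m - 1)) * ((n choose (k - s)) * ?B)" .
  qed simp
  finally show ?thesis by simp
qed


lemma choose_le_pow': "(n::nat) choose r \<le> n ^ r"
  by (cases "r \<le> n") (auto simp: binomial_le_pow binomial_eq_0)

lemma prob_bound:
  fixes VH :: "'a set" and EH :: "'a set set"
  assumes "finite VH" "card VH = k" "\<forall>e\<in>EH. e \<subseteq> VH \<and> card e = s"
    and "card EH = m" "m \<ge> 1" "1 \<le> r" "r \<le> s" "s \<le> k" "r \<le> n"
  shows "measure_pmf.prob (random_sets n r t) {us. contains_copy n (semi_random_graph S n us) VH EH}
    \<le> real (k choose r) ^ (m - 1) * real r ^ (r * (m - 1)) * (real t ^ m * real n ^ (k - s) / real n ^ (r * (m - 1)))"
proof -
  let ?\<Omega> = "{us. length us = t \<and> set us \<subseteq> rsets n r}"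
  let ?C = "{us. contains_copy n (semi_random_graph S n us) VH EH}"
  let ?R = "n choose r"
  let ?c = "k choose r"
  have fin: "finite ?\<Omega>" using finite_lists_length_eq[OF finite_rsets] by (simp add: conj_commute)
  have "{1..r} \<in> rsets n r" using assms(9) by (auto simp: rsets_def)
  then have "replicate t {1..r} \<in> ?\<Omega>" by auto
  then have ne: "?\<Omega> \<noteq> {}" by blast
  have cO: "card ?\<Omega> = ?R ^ t"
    using card_lists_length_eq[OF finite_rsets, of n r t] by (simp add: conj_commute card_rsets)
  have Rpos: "?R > 0" using assms(9) by simp
  have prob: "measure_pmf.prob (random_sets n r t) ?C = card (?\<Omega> \<inter> ?C) / real ?R ^ t"
    unfolding random_sets_def using measure_pmf_of_set[OF ne fin, of ?C] cO by simp
  have cb: "real (card (?\<Omega> \<inter> ?C)) * real ?R ^ (m - 1)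
      \<le> real t * (real (t choose (m - 1)) * (real (n choose (k - s)) * (real ?R ^ t * real ?c ^ (m - 1))))"
    using card_bound[OF assms(1-8), of t n S] unfolding of_nat_mult[symmetric] of_nat_power[symmetric] of_nat_le_iff .
  have "measure_pmf.prob (random_sets n r t) ?C
      \<le> real t * real (t choose (m - 1)) * real (n choose (k - s)) * real ?c ^ (m - 1) / real ?R ^ (m - 1)"
    unfolding prob using cb Rpos by (simp add: field_simps)
  also have "\<dots> \<le> real t * real t ^ (m - 1) * real n ^ (k - s) * real ?c ^ (m - 1) / ((real n / real r) ^ r) ^ (m - 1)"
  proof (rule frac_le)
    show "0 \<le> real t * real t ^ (m - 1) * real n ^ (k - s) * real ?c ^ (m - 1)" by simp
    have "real (t choose (m - 1)) \<le> real t ^ (m - 1)" using choose_le_pow'[of t "m - 1"] by (simp flip: of_nat_power)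
    moreover have "real (n choose (k - s)) \<le> real n ^ (k - s)" using choose_le_pow'[of n "k - s"] by (simp flip: of_nat_power)
    ultimately show "real t * real (t choose (m - 1)) * real (n choose (k - s)) * real ?c ^ (m - 1)
        \<le> real t * real t ^ (m - 1) * real n ^ (k - s) * real ?c ^ (m - 1)"
      by (intro mult_right_mono mult_left_mono mult_mono) auto
    show "0 < ((real n / real r) ^ r) ^ (m - 1)" using assms by simp
    show "((real n / real r) ^ r) ^ (m - 1) \<le> real ?R ^ (m - 1)"
      by (rule power_mono[OF binomial_ge_n_over_k_pow_k[OF assms(9)]]) simp
  qed
  also have "\<dots> = real ?c ^ (m - 1) * real r ^ (r * (m - 1)) * (real t ^ m * real n ^ (k - s) / real n ^ (r * (m - 1)))"
  proof -
    have "real t * real t ^ (m - 1) = real t ^ m" using assms(5) by (metis One_nat_def Suc_pred' less_eq_Suc_le power_Suc)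
    moreover have "((real n / real r) ^ r) ^ (m - 1) = real n ^ (r * (m - 1)) / real r ^ (r * (m - 1))"
      by (simp add: power_divide power_mult)
    moreover have "real r > 0" "real n > 0" using assms by auto
    ultimately show ?thesis by (simp add: field_simps)
  qed
  finally show ?thesis .
qed


theorem theorem2:
  fixes k s r m :: nat and VH :: "'a set" and EH :: "'a set set"
    and S :: strategy and t :: "nat \<Rightarrow> nat"
  assumes "1 \<le> r" "r \<le> s" "s \<le> k"
    and "finite VH" "card VH = k"
    and "\<forall>e\<in>EH. e \<subseteq> VH \<and> card e = s"
    and "card EH = m" "m \<ge> 1"
    and "valid_strategy r s S"
    and "(\<lambda>n. real (t n)) \<in> o(\<lambda>n. real n powr (real r - (real k - real s + real r) / real m))"
  shows "(\<lambda>n. measure_pmf.prob (random_sets n r (t n))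
            {us. \<not> contains_copy n (semi_random_graph S n us) VH EH}) \<longlonglongrightarrow> 1"
proof -
  define \<beta> where "\<beta> = real r - (real k - real s + real r) / real m"
  define K where "K = real (k choose r) ^ (m - 1) * real r ^ (r * (m - 1))"
  define P where "P n = measure_pmf.prob (random_sets n r (t n)) {us. contains_copy n (semi_random_graph S n us) VH EH}" for n
  have lim0: "(\<lambda>n. real (t n) / real n powr \<beta>) \<longlonglongrightarrow> 0"
    using smalloD_tendsto[OF assms(10)] unfolding \<beta>_def by simp
  have "(\<lambda>n. (real (t n) / real n powr \<beta>) ^ m) \<longlonglongrightarrow> 0"
    using tendsto_power[OF lim0, of m] assms(8) by (simp add: power_0_left)
  then have limK: "(\<lambda>n. K * (real (t n) / real n powr \<beta>) ^ m) \<longlonglongrightarrow> 0"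
    by (rule tendsto_mult_right_zero)
  have ev: "eventually (\<lambda>n. P n \<le> K * (real (t n) / real n powr \<beta>) ^ m) sequentially"
  proof (rule eventually_sequentiallyI[of "max r 1"])
    fix n assume n: "max r 1 \<le> n"
    then have npos: "real n > 0" by simp
    have "P n \<le> K * (real (t n) ^ m * real n ^ (k - s) / real n ^ (r * (m - 1)))"
      unfolding P_def K_def by (rule prob_bound) (use assms n in auto)
    also have "real (t n) ^ m * real n ^ (k - s) / real n ^ (r * (m - 1)) = (real (t n) / real n powr \<beta>) ^ m"
    proof -
      have "(real n powr \<beta>) ^ m = real n powr (real m * \<beta>)" using npos by (simp add: powr_power)
      also have "real m * \<beta> = real (r * (m - 1)) - real (k - s)"
        unfolding \<beta>_def using assms(3,8) by (simp add: of_nat_diff field_simps)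
      also have "real n powr (real (r * (m - 1)) - real (k - s)) = real n ^ (r * (m - 1)) / real n ^ (k - s)"
        using npos by (simp only: powr_diff powr_realpow)
      finally show ?thesis using npos by (simp add: power_divide)
    qed
    finally show "P n \<le> K * (real (t n) / real n powr \<beta>) ^ m" .
  qed
  have "P \<longlonglongrightarrow> 0"
    by (rule tendsto_sandwich[OF _ ev tendsto_const limK]) (simp add: P_def)
  then have "(\<lambda>n. 1 - P n) \<longlonglongrightarrow> 1 - 0" by (intro tendsto_diff tendsto_const)
  moreover have "measure_pmf.prob (random_sets n r (t n)) {us. \<not> contains_copy n (semi_random_graph S n us) VH EH} = 1 - P n" for n
  proof -
    have "{us. \<not> contains_copy n (semi_random_graph S n us) VH EH} = UNIV - {us. contains_copy n (semi_random_graph S n us) VH EH}" by auto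
    then show ?thesis unfolding P_def
      using measure_pmf.prob_compl[where M="random_sets n r (t n)" and A="{us. contains_copy n (semi_random_graph S n us) VH EH}"]
      by simp
  qed
  ultimately show ?thesis by simp
qed

end
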